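(* Let $G=(G^0,G^1,r,s)$ be a topological graph in which $G^0$ and $G^1$ are compact Hausdorff spaces and $r,s:G^1\to G^0$ are surjective local homeomorphisms. Then for each $n\in\mathbb{N}$ the sets $\{v\in G^0:|G^1v|=n\}$ and $\{v\in G^0:|vG^1|=n\}$ are compact open.
   Context: For $v\in G^0$, $G^1v:=s^{-1}(v)$ and $vG^1:=r^{-1}(v)$; $|\cdot|$ denotes cardinality. *)

theory Defs
  imports "HOL-Analysis.Analysis"
begin

definition local_homeomorphism :: "'a topology \<Rightarrow> 'b topology \<Rightarrow> ('a \<Rightarrow> 'b) \<Rightarrow> bool" where
  "local_homeomorphism X Y f \<longleftrightarrow>
     continuous_map X Y f \<and>
     (\<forall>x\<in>topspace X. \<exists>U. openin X U \<and> x \<in> U \<and> openin Y (f ` U) \<and>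
        homeomorphic_map (subtopology X U) (subtopology Y (f ` U)) f)"

text \<open>For v in G0, the set of edges with source v (G^1 v) and with range v (v G^1).\<close>
definition src_fibre :: "'e topology \<Rightarrow> ('e \<Rightarrow> 'v) \<Rightarrow> 'v \<Rightarrow> 'e set" where
  "src_fibre G1 s v = {e \<in> topspace G1. s e = v}"

definition rng_fibre :: "'e topology \<Rightarrow> ('e \<Rightarrow> 'v) \<Rightarrow> 'v \<Rightarrow> 'e set" where
  "rng_fibre G1 r v = {e \<in> topspace G1. r e = v}"

end

theory Submission
  imports Defs
begin

lemma lh_nbhd:
  assumes "local_homeomorphism X Y f" "x \<in> topspace X"
  shows "\<exists>W. openin X W \<and> x \<in> W \<and> inj_on f W \<and> (\<forall>S. openin X S \<and> S \<subseteq> W \<longrightarrow> openin Y (f ` S))"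
proof -
  obtain U where U: "openin X U" "x \<in> U" "openin Y (f ` U)"
    "homeomorphic_map (subtopology X U) (subtopology Y (f ` U)) f"
    using assms unfolding local_homeomorphism_def by blast
  have tU: "topspace (subtopology X U) = U"
    using openin_subset[OF U(1)] by (simp add: topspace_subtopology Int_absorb1)
  have inj: "inj_on f U" using homeomorphic_imp_injective_map[OF U(4)] tU by simp
  have "openin Y (f ` S)" if "openin X S" "S \<subseteq> U" for S
  proof -
    have "openin (subtopology X U) S" using that openin_open_subtopology[OF U(1)] by simp
    moreover have "S \<subseteq> topspace (subtopology X U)" using tU that(2) by simp
    ultimately have "openin (subtopology Y (f ` U)) (f ` S)"
      using homeomorphic_map_openness[OF U(4)] by simp
    then show ?thesis using openin_open_subtopology[OF U(3)] by simp
  qed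
  then show ?thesis using U(1,2) inj by blast
qed

lemma fib_finite:
  assumes "compact_space X" "Hausdorff_space Y" "local_homeomorphism X Y f"
  shows "finite {x \<in> topspace X. f x = y}"
proof (cases "y \<in> topspace Y")
  case False
  have "continuous_map X Y f" using assms(3) unfolding local_homeomorphism_def by blast
  then have "{x \<in> topspace X. f x = y} = {}" using False
    by (auto simp: continuous_map_def)
  then show ?thesis by (metis finite.emptyI)
next
  case True
  let ?F = "{x \<in> topspace X. f x = y}"
  have cont: "continuous_map X Y f" using assms(3) unfolding local_homeomorphism_def by blast
  have "closedin X ?F"
    using closedin_continuous_map_preimage[OF cont closedin_Hausdorff_singleton[OF assms(2) True]]
    by simp
  then have cF: "compactin X ?F" using closedin_compact_space assms(1) by blast
  define \<U> where "\<U> = {W. openin X W \<and> inj_on f W}"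
  have "?F \<subseteq> \<Union>\<U>"
    using lh_nbhd[OF assms(3)] unfolding \<U>_def by blast
  then obtain \<F> where F: "finite \<F>" "\<F> \<subseteq> \<U>" "?F \<subseteq> \<Union>\<F>"
    using compactinD[OF cF, of \<U>] unfolding \<U>_def by blast
  have eq: "?F \<subseteq> (\<Union>W\<in>\<F>. ?F \<inter> W)" using F(3) by blast
  have fin: "finite (?F \<inter> W)" if "W \<in> \<F>" for W
  proof -
    have "inj_on f W" using that F(2) unfolding \<U>_def by blast
    then have "\<forall>a\<in>?F \<inter> W. \<forall>b\<in>?F \<inter> W. a = b" by (auto dest: inj_onD)
    then have *: "\<forall>a\<in>?F \<inter> W. ?F \<inter> W \<subseteq> {a}" by blast
    show ?thesis
    proof (cases "?F \<inter> W = {}")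
      case False
      then obtain a where "a \<in> ?F \<inter> W" by blast
      then have "?F \<inter> W \<subseteq> {a}" using * by blast
      then show ?thesis by (rule finite_subset) simp
    qed simp
  qed
  have fU: "finite (\<Union>W\<in>\<F>. ?F \<inter> W)" by (rule finite_UN_I[OF F(1) fin])
  show ?thesis by (rule finite_subset[OF eq fU])
qed

lemma fib_local:
  assumes cX: "compact_space X" and hX: "Hausdorff_space X" and hY: "Hausdorff_space Y"
    and lh: "local_homeomorphism X Y f" and y: "y \<in> topspace Y"
  shows "\<exists>V. openin Y V \<and> y \<in> V \<and> (\<forall>y'\<in>V. card {x \<in> topspace X. f x = y'} = card {x \<in> topspace X. f x = y})"
proof -
  define F where "F = {x \<in> topspace X. f x = y}"
  have finF: "finite F" using fib_finite[OF cX hY lh] unfolding F_def .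
  have cont: "continuous_map X Y f" using lh unfolding local_homeomorphism_def by blast
  have "\<forall>x\<in>F. \<exists>W. openin X W \<and> x \<in> W \<and> inj_on f W \<and>
      (\<forall>S. openin X S \<and> S \<subseteq> W \<longrightarrow> openin Y (f ` S))"
    using lh_nbhd[OF lh] unfolding F_def by (auto simp only: mem_Collect_eq)
  then have "\<exists>W0. \<forall>x\<in>F. openin X (W0 x) \<and> x \<in> W0 x \<and> inj_on f (W0 x) \<and>
      (\<forall>S. openin X S \<and> S \<subseteq> W0 x \<longrightarrow> openin Y (f ` S))" by (rule bchoice)
  then obtain W0 where W0: "\<forall>x\<in>F. openin X (W0 x) \<and> x \<in> W0 x \<and> inj_on f (W0 x) \<and>
      (\<forall>S. openin X S \<and> S \<subseteq> W0 x \<longrightarrow> openin Y (f ` S))"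
    by (rule exE)
  define W where "W = W0"
  have W: "openin X (W x) \<and> x \<in> W x \<and> inj_on f (W x) \<and>
      (\<forall>S. openin X S \<and> S \<subseteq> W x \<longrightarrow> openin Y (f ` S))" if "x \<in> F" for x
    using W0 that unfolding W_def by blast
  have hs: "\<forall>x\<in>F. \<forall>z\<in>F. x \<noteq> z \<longrightarrow> (\<exists>A B. openin X A \<and> openin X B \<and> x \<in> A \<and> z \<in> B \<and> disjnt A B)"
    using hX unfolding Hausdorff_space_def F_def by blast
  have "\<forall>xz\<in>F \<times> F. \<exists>q. fst xz \<noteq> snd xz \<longrightarrow> openin X (fst q) \<and> openin X (snd q) \<and> fst xz \<in> fst q \<and> snd xz \<in> snd q \<and> disjnt (fst q) (snd q)"
  proof
    fix xz assume "xz \<in> F \<times> F"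
    then show "\<exists>q. fst xz \<noteq> snd xz \<longrightarrow> openin X (fst q) \<and> openin X (snd q) \<and> fst xz \<in> fst q \<and> snd xz \<in> snd q \<and> disjnt (fst q) (snd q)"
      using hs by (metis fst_conv snd_conv mem_Times_iff)
  qed
  then have "\<exists>p0. \<forall>xz\<in>F \<times> F. fst xz \<noteq> snd xz \<longrightarrow> openin X (fst (p0 xz)) \<and> openin X (snd (p0 xz)) \<and> fst xz \<in> fst (p0 xz) \<and> snd xz \<in> snd (p0 xz) \<and> disjnt (fst (p0 xz)) (snd (p0 xz))" by (rule bchoice)
  then obtain p0 where p0: "\<forall>xz\<in>F \<times> F. fst xz \<noteq> snd xz \<longrightarrow> openin X (fst (p0 xz)) \<and> openin X (snd (p0 xz)) \<and> fst xz \<in> fst (p0 xz) \<and> snd xz \<in> snd (p0 xz) \<and> disjnt (fst (p0 xz)) (snd (p0 xz))"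
    by (rule exE)
  define p where "p x z = p0 (x, z)" for x z
  have p: "openin X (fst (p x z)) \<and> openin X (snd (p x z)) \<and> x \<in> fst (p x z) \<and> z \<in> snd (p x z) \<and> disjnt (fst (p x z)) (snd (p x z))"
    if "x \<in> F" "z \<in> F" "x \<noteq> z" for x z
    using p0 that unfolding p_def by fastforce
  define U where "U x = (W x \<inter> \<Inter>((\<lambda>z. fst (p x z)) ` (F - {x}))) \<inter> \<Inter>((\<lambda>z. snd (p z x)) ` (F - {x}))" for x
  have Uopen: "openin X (U x)" if "x \<in> F" for x
  proof -
    have o1: "openin X (W x \<inter> \<Inter>((\<lambda>z. fst (p x z)) ` (F - {x})))"
      by (rule openin_Int_Inter) (use finF W[OF that] p[OF that] in auto)
    show ?thesis unfolding U_def
      by (rule openin_Int_Inter) (use finF o1 p[OF _ that] in auto)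
  qed
  have UW: "U x \<subseteq> W x" for x unfolding U_def by blast
  have xU: "x \<in> U x" if "x \<in> F" for x
  proof -
    have "x \<in> W x" using W[OF that] by blast
    moreover have "x \<in> fst (p x z)" if "z \<in> F - {x}" for z using p[of x z] that \<open>x \<in> F\<close> by blast
    moreover have "x \<in> snd (p z x)" if "z \<in> F - {x}" for z using p[of z x] that \<open>x \<in> F\<close> by blast
    ultimately show ?thesis unfolding U_def by blast
  qed
  have Udisj: "U x \<inter> U z = {}" if "x \<in> F" "z \<in> F" "x \<noteq> z" for x z
  proof -
    have "U x \<subseteq> fst (p x z)" unfolding U_def using that by blast
    moreover have "U z \<subseteq> snd (p x z)" unfolding U_def using that by blast
    ultimately show ?thesis using p[OF that] by (auto simp: disjnt_def)
  qed
  have fUopen: "openin Y (f ` U x)" if "x \<in> F" for x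
    using W[OF that] Uopen[OF that] UW by blast
  define K where "K = topspace X - (\<Union>x\<in>F. U x)"
  have "closedin X K" unfolding K_def using Uopen by blast
  then have "compactin X K" using closedin_compact_space cX by blast
  then have "compactin Y (f ` K)" using image_compactin cont by blast
  then have cfK: "closedin Y (f ` K)" using compactin_imp_closedin hY by blast
  define V where "V = (topspace Y - f ` K) \<inter> \<Inter>((\<lambda>x. f ` U x) ` F)"
  have Vopen: "openin Y V" unfolding V_def
    apply (rule openin_Int_Inter)
    using finF cfK fUopen by auto
  have yV: "y \<in> V"
  proof -
    have "y \<notin> f ` K"
    proof
      assume "y \<in> f ` K"
      then obtain k where "k \<in> K" "f k = y" by blast
      then have "k \<in> F" unfolding K_def F_def by blast
      then show False using xU \<open>k \<in> K\<close> unfolding K_def by blast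
    qed
    moreover have "y \<in> f ` U x" if "x \<in> F" for x
      using imageI[OF xU[OF that], of f] that unfolding F_def by simp
    ultimately show ?thesis unfolding V_def using y by blast
  qed
  have cardV: "card {x \<in> topspace X. f x = y'} = card F" if y'V: "y' \<in> V" for y'
  proof -
    have "\<forall>x\<in>F. \<exists>x'. x' \<in> U x \<and> f x' = y'" using y'V unfolding V_def by blast
    then have "\<exists>g. \<forall>x\<in>F. g x \<in> U x \<and> f (g x) = y'" by (rule bchoice)
    then obtain g0 where g0: "\<forall>x\<in>F. g0 x \<in> U x \<and> f (g0 x) = y'" by (rule exE)
    define g where "g = g0"
    have g: "g x \<in> U x \<and> f (g x) = y'" if "x \<in> F" for x using g0 that unfolding g_def by blast
    have "bij_betw g F {x \<in> topspace X. f x = y'}"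
      unfolding bij_betw_def
    proof (intro conjI)
      show "inj_on g F"
      proof (rule inj_onI)
        fix x z assume "x \<in> F" "z \<in> F" "g x = g z"
        show "x = z"
        proof (rule ccontr)
          assume "x \<noteq> z"
          then have d: "U x \<inter> U z = {}" by (rule Udisj[OF \<open>x \<in> F\<close> \<open>z \<in> F\<close>])
          have a: "g x \<in> U x" using g[OF \<open>x \<in> F\<close>] by simp
          have b: "g x \<in> U z" using g[OF \<open>z \<in> F\<close>] \<open>g x = g z\<close> by simp
          show False using d a b by auto
        qed
      qed
      show "g ` F = {x \<in> topspace X. f x = y'}"
      proof
        show "g ` F \<subseteq> {x \<in> topspace X. f x = y'}"
        proof
          fix u assume "u \<in> g ` F"
          then obtain x where x: "x \<in> F" "u = g x" by blast
          have "U x \<subseteq> topspace X" by (rule openin_subset[OF Uopen[OF x(1)]])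
          moreover have "g x \<in> U x" "f (g x) = y'" using g[OF x(1)] by auto
          ultimately show "u \<in> {x \<in> topspace X. f x = y'}" using x(2) by auto
        qed
        show "{x \<in> topspace X. f x = y'} \<subseteq> g ` F"
        proof
          fix x' assume x': "x' \<in> {x \<in> topspace X. f x = y'}"
          have x'1: "x' \<in> topspace X" "f x' = y'" using x' by auto
          have "y' \<in> topspace Y - f ` K" using y'V unfolding V_def by blast
          then have "y' \<notin> f ` K" by blast
          then have "x' \<notin> K" using x'1(2) by (auto simp del: Diff_iff)
          then have "x' \<in> (\<Union>x\<in>F. U x)" using x'1(1) unfolding K_def by blast
          then obtain x where x: "x \<in> F" "x' \<in> U x" by blast
          have inj: "inj_on f (W x)" using W[OF x(1)] by blast
          have gx: "g x \<in> W x" "f (g x) = y'" using g[OF x(1)] UW by blast+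
          have x'W: "x' \<in> W x" using x(2) UW by blast
          have "x' = g x" by (rule inj_onD[OF inj _ x'W gx(1)]) (simp add: gx(2) x'1(2))
          then show "x' \<in> g ` F" by (rule image_eqI[OF _ x(1)])
        qed
      qed
    qed
    then show ?thesis by (rule bij_betw_same_card[symmetric])
  qed
  show ?thesis
  proof (intro exI conjI ballI)
    show "openin Y V" by (rule Vopen)
    show "y \<in> V" by (rule yV)
    fix y' assume "y' \<in> V"
    from cardV[OF this] show "card {x \<in> topspace X. f x = y'} = card {x \<in> topspace X. f x = y}"
      unfolding F_def .
  qed
qed


lemma level_open:
  assumes cX: "compact_space X" and hX: "Hausdorff_space X" and hY: "Hausdorff_space Y"
    and lh: "local_homeomorphism X Y f"
    and P: "\<And>v w. card {x \<in> topspace X. f x = v} = card {x \<in> topspace X. f x = w} \<Longrightarrow> P v = P w"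
  shows "openin Y {v \<in> topspace Y. P v}"
proof (subst openin_subopen, intro ballI)
  fix v assume v: "v \<in> {v \<in> topspace Y. P v}"
  then have vt: "v \<in> topspace Y" and Pv: "P v" by simp_all
  obtain V where V0: "openin Y V \<and> v \<in> V \<and>
    (\<forall>y'\<in>V. card {x \<in> topspace X. f x = y'} = card {x \<in> topspace X. f x = v})"
    using fib_local[OF cX hX hY lh vt] by (rule exE)
  note V = conjunct1[OF V0] conjunct1[OF conjunct2[OF V0]] conjunct2[OF conjunct2[OF V0]]
  have "V \<subseteq> {v \<in> topspace Y. P v}"
  proof
    fix y' assume y': "y' \<in> V"
    have "y' \<in> topspace Y" using openin_subset[OF V(1)] y' by (rule subsetD)
    moreover have "P y' = P v" by (rule P) (rule bspec[OF V(3) y'])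
    ultimately show "y' \<in> {v \<in> topspace Y. P v}" using Pv by simp
  qed
  then show "\<exists>T. openin Y T \<and> v \<in> T \<and> T \<subseteq> {v \<in> topspace Y. P v}" using V(1,2) by (intro exI conjI)
qed

lemma level_clopen:
  assumes cX: "compact_space X" and hX: "Hausdorff_space X" and cY: "compact_space Y" and hY: "Hausdorff_space Y"
    and lh: "local_homeomorphism X Y f"
  shows "compactin Y {v \<in> topspace Y. finite {x \<in> topspace X. f x = v} \<and> card {x \<in> topspace X. f x = v} = n}
     \<and> openin Y {v \<in> topspace Y. finite {x \<in> topspace X. f x = v} \<and> card {x \<in> topspace X. f x = v} = n}"
proof -
  have fin: "finite {x \<in> topspace X. f x = v}" for v by (rule fib_finite[OF cX hY lh])
  have eq1: "{v \<in> topspace Y. finite {x \<in> topspace X. f x = v} \<and> card {x \<in> topspace X. f x = v} = n}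
      = {v \<in> topspace Y. card {x \<in> topspace X. f x = v} = n}" using fin by simp
  have o1: "openin Y {v \<in> topspace Y. card {x \<in> topspace X. f x = v} = n}"
    by (rule level_open[OF cX hX hY lh]) simp
  have o2: "openin Y {v \<in> topspace Y. card {x \<in> topspace X. f x = v} \<noteq> n}"
    by (rule level_open[OF cX hX hY lh]) simp
  have "topspace Y - {v \<in> topspace Y. card {x \<in> topspace X. f x = v} = n}
      = {v \<in> topspace Y. card {x \<in> topspace X. f x = v} \<noteq> n}" by auto
  then have "closedin Y {v \<in> topspace Y. card {x \<in> topspace X. f x = v} = n}"
    unfolding closedin_def using o2 by simp
  then have "compactin Y {v \<in> topspace Y. card {x \<in> topspace X. f x = v} = n}"
    by (rule closedin_compact_space[OF cY])
  then show ?thesis using o1 unfolding eq1 by simp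
qed

theorem mainTheorem9:
  fixes G0 :: "'v topology" and G1 :: "'e topology" and r s :: "'e \<Rightarrow> 'v" and n :: nat
  assumes "compact_space G0" "Hausdorff_space G0"
    and "compact_space G1" "Hausdorff_space G1"
    and "local_homeomorphism G1 G0 r" "r ` topspace G1 = topspace G0"
    and "local_homeomorphism G1 G0 s" "s ` topspace G1 = topspace G0"
  shows "compactin G0 {v \<in> topspace G0. finite (src_fibre G1 s v) \<and> card (src_fibre G1 s v) = n}
       \<and> openin G0 {v \<in> topspace G0. finite (src_fibre G1 s v) \<and> card (src_fibre G1 s v) = n}
       \<and> compactin G0 {v \<in> topspace G0. finite (rng_fibre G1 r v) \<and> card (rng_fibre G1 r v) = n}
       \<and> openin G0 {v \<in> topspace G0. finite (rng_fibre G1 r v) \<and> card (rng_fibre G1 r v) = n}"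
proof -
  have "src_fibre G1 s v = {x \<in> topspace G1. s x = v}" "rng_fibre G1 r v = {x \<in> topspace G1. r x = v}" for v
    unfolding src_fibre_def rng_fibre_def by simp_all
  then show ?thesis
    using level_clopen[OF assms(3,4,1,2,7), of n] level_clopen[OF assms(3,4,1,2,5), of n]
    by simp
qed

end
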